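(* Let $C$ be a copula and $\hat C(u,v)=u+v-1+C(1-u,1-v)$ its survival copula. Then for all $p,q\in[0,1]$, $$\lambda^{\hat C}(q|p)=\lambda^C(1-q|1-p),$$ in the sense that one side exists if and only if the other does, and then they are equal.
   Context: For a copula $C$ (bivariate distribution function on $[0,1]^2$ with uniform margins) and $p,q\in[0,1]$, the $(p,q)$-quantile dependence coefficient is $\lambda^C(q|p)=\lim_{t\to0^+}\frac{V_C([(p-t)^+,(p+t)^-]\times[(q-t)^+,(q+t)^-])}{(p+t)^- - (p-t)^+}$ when the limit exists, where $a^+=\max(a,0)$, $a^-=1-(1-a)^+$, and $V_C([u_1,u_2]\times[v_1,v_2])=C(u_2,v_2)-C(u_2,v_1)-C(u_1,v_2)+C(u_1,v_1)$. *)

theory Defs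
  imports "HOL-Analysis.Analysis"
begin

definition copula :: "(real \<Rightarrow> real \<Rightarrow> real) \<Rightarrow> bool" where
  "copula C \<longleftrightarrow>
     (\<forall>u\<in>{0..1}. C u 0 = 0 \<and> C 0 u = 0 \<and> C u 1 = u \<and> C 1 u = u) \<and>
     (\<forall>u1 u2 v1 v2. 0 \<le> u1 \<and> u1 \<le> u2 \<and> u2 \<le> 1 \<and> 0 \<le> v1 \<and> v1 \<le> v2 \<and> v2 \<le> 1 \<longrightarrow>
        C u2 v2 - C u2 v1 - C u1 v2 + C u1 v1 \<ge> 0)"

definition Cvol :: "(real \<Rightarrow> real \<Rightarrow> real) \<Rightarrow> real \<Rightarrow> real \<Rightarrow> real \<Rightarrow> real \<Rightarrow> real" where
  "Cvol C u1 u2 v1 v2 = C u2 v2 - C u2 v1 - C u1 v2 + C u1 v1"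

definition pos_part :: "real \<Rightarrow> real" where
  "pos_part a = max a 0"

definition neg_part :: "real \<Rightarrow> real" where
  "neg_part a = 1 - pos_part (1 - a)"

definition qdc_quot :: "(real \<Rightarrow> real \<Rightarrow> real) \<Rightarrow> real \<Rightarrow> real \<Rightarrow> real \<Rightarrow> real" where
  "qdc_quot C p q t =
     Cvol C (pos_part (p - t)) (neg_part (p + t)) (pos_part (q - t)) (neg_part (q + t))
       / (neg_part (p + t) - pos_part (p - t))"

text \<open>lambda^C(q|p) exists and equals L.\<close>
definition qdc_has :: "(real \<Rightarrow> real \<Rightarrow> real) \<Rightarrow> real \<Rightarrow> real \<Rightarrow> real \<Rightarrow> bool" where
  "qdc_has C p q L \<longleftrightarrow> ((\<lambda>t. qdc_quot C p q t) \<longlongrightarrow> L) (at_right 0)"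

definition survival_copula :: "(real \<Rightarrow> real \<Rightarrow> real) \<Rightarrow> real \<Rightarrow> real \<Rightarrow> real" where
  "survival_copula C u v = u + v - 1 + C (1 - u) (1 - v)"

end

theory Submission
  imports Defs
begin

lemma quot_eq: "qdc_quot (survival_copula C) p q t = qdc_quot C (1 - p) (1 - q) t"
proof -
  have e1: "1 - neg_part (x + t) = pos_part ((1 - x) - t)" for x
    by (simp add: neg_part_def pos_part_def algebra_simps)
  have e2: "1 - pos_part (x - t) = neg_part ((1 - x) + t)" for x
    by (simp add: neg_part_def pos_part_def algebra_simps)
  have v: "Cvol (survival_copula C) a1 a2 b1 b2 = Cvol C (1 - a2) (1 - a1) (1 - b2) (1 - b1)"
    for a1 a2 b1 b2 by (simp add: Cvol_def survival_copula_def algebra_simps)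
  show ?thesis
    unfolding qdc_quot_def v e1 e2
    by (simp add: neg_part_def pos_part_def algebra_simps)
qed

theorem proposition5:
  fixes C :: "real \<Rightarrow> real \<Rightarrow> real" and p q :: real
  assumes "copula C" and "p \<in> {0..1}" and "q \<in> {0..1}"
  shows "\<forall>L. qdc_has (survival_copula C) p q L \<longleftrightarrow> qdc_has C (1 - p) (1 - q) L"
  unfolding qdc_has_def quot_eq by simp

end
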